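(* For any choice of almost disjoint family and enumeration in the definition of $\rho^{[0,1]}$, we have $\rho^{[0,1]}\leq_K\rho_{\mathrm{conv}}$ and $\rho_{\mathrm{conv}}\not\leq_K\rho^{[0,1]}$.
   Context: $\mathrm{conv}$ is the ideal on $\mathbb{Q}\cap[0,1]$ of all sets covered by the ranges of finitely many sequences in $\mathbb{Q}\cap[0,1]$ convergent in $[0,1]$; $\mathrm{conv}^+$ is its complement in $\mathcal{P}(\mathbb{Q}\cap[0,1])$. $\rho_{\mathrm{conv}}\colon\mathrm{conv}^+\to[\mathbb{Q}\cap[0,1]]^\omega$ is $\rho_{\mathrm{conv}}(A)=A$ (domain sets are subsets of $\Omega=\mathbb{Q}\cap[0,1]$). Definition of $\rho^{[0,1]}$: let $\mathcal{A}=\{A_\alpha:\alpha<\mathfrak{c}\}$ be an almost disjoint family on $\omega$ (pairwise distinct infinite subsets with pairwise finite intersections). Let $X$ be the set of all $x\colon\omega\times\omega\to[0,1]\cap\mathbb{Q}$ such that: (i) for every $p\in[0,1]$ there is an open neighborhood $U$ of $p$ with $x[(\omega\setminus[0,n])\times\omega]\not\subseteq U$ for all $n$; (ii) $x$ is injective; (iii) $x[(\omega\setminus[0,n])\times\omega]\notin\mathrm{conv}$ for all $n$. Fix an enumeration $X=\{x_\alpha:\alpha<\mathfrak{c}\}$. Let $\overline{\mathcal{A}}=\{A\setminus K:A\in\mathcal{A},K\in[\omega]^{<\omega}\}$ and $\rho^{[0,1]}\colon\overline{\mathcal{A}}\to[[0,1]\cap\mathbb{Q}]^\omega$, $\rho^{[0,1]}(A_\alpha\setminus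 K)=x_\alpha[(\omega\setminus[0,\max(A_\alpha\cap K)])\times\omega]$, with $\max\emptyset=0$; here $[0,m]=\{0,\dots,m\}$ (domain sets are subsets of $\Omega=\omega$). Katětov order: for $\rho_i\colon\mathcal{F}_i\to[\Lambda_i]^\omega$ with $\mathcal{F}_i\subseteq[\Omega_i]^\omega$, $\rho_2\leq_K\rho_1$ if there is $f\colon\Lambda_1\to\Lambda_2$ such that for every $F_1\in\mathcal{F}_1$ there is $F_2\in\mathcal{F}_2$ such that for every finite $K_1\subseteq\Omega_1$ there is a finite $K_2\subseteq\Omega_2$ with $\rho_2(F_2\setminus K_2)\subseteq f[\rho_1(F_1\setminus K_1)]$. *)

theory Defs
  imports Complex_Main
begin

definition Q01 :: "real set" where
  "Q01 = {q. q \<in> \<rat> \<and> 0 \<le> q \<and> q \<le> 1}"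

definition conv_seq :: "(nat \<Rightarrow> real) \<Rightarrow> bool" where
  "conv_seq s \<longleftrightarrow> range s \<subseteq> Q01 \<and> (\<exists>L. 0 \<le> L \<and> L \<le> 1 \<and> s \<longlonglongrightarrow> L)"

definition conv :: "real set set" where
  "conv = {A. A \<subseteq> Q01 \<and> (\<exists>S. finite S \<and> (\<forall>s\<in>S. conv_seq s) \<and> A \<subseteq> (\<Union>s\<in>S. range s))}"

definition conv_plus :: "real set set" where
  "conv_plus = Pow Q01 - conv"

definition rho_conv :: "real set \<Rightarrow> real set" where
  "rho_conv A = A"

text \<open>Katetov order: \<open>katetov_le \<rho>2 F2 \<Omega>2 \<Lambda>2 \<rho>1 F1 \<Omega>1 \<Lambda>1\<close> means \<open>\<rho>2 \<le>_K \<rho>1\<close>.\<close>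
definition katetov_le ::
  "('c set \<Rightarrow> 'd set) \<Rightarrow> 'c set set \<Rightarrow> 'c set \<Rightarrow> 'd set \<Rightarrow>
   ('a set \<Rightarrow> 'b set) \<Rightarrow> 'a set set \<Rightarrow> 'a set \<Rightarrow> 'b set \<Rightarrow> bool" where
  "katetov_le \<rho>2 F2 \<Omega>2 \<Lambda>2 \<rho>1 F1 \<Omega>1 \<Lambda>1 \<longleftrightarrow>
     (\<exists>f. (\<forall>l\<in>\<Lambda>1. f l \<in> \<Lambda>2) \<and>
        (\<forall>S1\<in>F1. \<exists>S2\<in>F2. \<forall>K1. finite K1 \<and> K1 \<subseteq> \<Omega>1 \<longrightarrow>
            (\<exists>K2. finite K2 \<and> K2 \<subseteq> \<Omega>2 \<and> \<rho>2 (S2 - K2) \<subseteq> f ` \<rho>1 (S1 - K1))))"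

text \<open>Almost disjoint family indexed by a set of size continuum (the reals).\<close>
definition almost_disjoint_family :: "(real \<Rightarrow> nat set) \<Rightarrow> bool" where
  "almost_disjoint_family A \<longleftrightarrow> inj A \<and> (\<forall>a. infinite (A a)) \<and>
     (\<forall>a b. a \<noteq> b \<longrightarrow> finite (A a \<inter> A b))"

definition tail_img :: "(nat \<times> nat \<Rightarrow> real) \<Rightarrow> nat \<Rightarrow> real set" where
  "tail_img x n = x ` ({k. n < k} \<times> UNIV)"

definition Xset :: "(nat \<times> nat \<Rightarrow> real) set" where
  "Xset = {x. range x \<subseteq> Q01 \<and>
     (\<forall>p\<in>{0..1}. \<exists>U. open U \<and> p \<in> U \<and> (\<forall>n. \<not> tail_img x n \<subseteq> U)) \<and>
     inj x \<and>
     (\<forall>n. tail_img x n \<notin> conv)}"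

definition max0 :: "nat set \<Rightarrow> nat" where
  "max0 S = (if S = {} then 0 else Max S)"

definition Abar :: "(real \<Rightarrow> nat set) \<Rightarrow> nat set set" where
  "Abar A = {A a - K | a K. finite K}"

text \<open>\<open>\<rho>^{[0,1]}(A_\<alpha> \ K) = x_\<alpha>[(\<omega> \ [0,max(A_\<alpha> \<inter> K)]) \<times> \<omega>]\<close>; note
  \<open>A_\<alpha> \<inter> K = A_\<alpha> - (A_\<alpha> - K)\<close>, so this is well defined.\<close>
definition rho01 :: "(real \<Rightarrow> nat set) \<Rightarrow> (real \<Rightarrow> nat \<times> nat \<Rightarrow> real) \<Rightarrow> nat set \<Rightarrow> real set" where
  "rho01 A x S = (let a = (SOME a. \<exists>K. finite K \<and> S = A a - K)
                  in tail_img (x a) (max0 (A a - S)))"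

end

theory Submission
  imports Defs "HOL-Analysis.Analysis" "HOL-Library.Nat_Bijection"
begin

lemma Q01_sub: "Q01 \<subseteq> {0..1}" by (auto simp: Q01_def)

lemma limpt_range_conv:
  fixes s :: "nat \<Rightarrow> real"
  assumes "s \<longlonglongrightarrow> L" "p islimpt range s" shows "p = L"
proof (rule ccontr)
  assume ne: "p \<noteq> L"
  define e where "e = dist p L / 2"
  have e: "e > 0" using ne by (simp add: e_def)
  from assms(1) have "eventually (\<lambda>n. dist (s n) L < e) sequentially"
    using e tendsto_iff by blast
  then obtain N where N: "\<And>n. n \<ge> N \<Longrightarrow> dist (s n) L < e"
    by (auto simp: eventually_sequentially)
  have "range s \<inter> ball p e \<subseteq> s ` {..<N}"
  proof
    fix y assume "y \<in> range s \<inter> ball p e"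
    then obtain n where y: "y = s n" "dist p (s n) < e" by auto
    have "\<not> n \<ge> N"
    proof
      assume "n \<ge> N"
      then have "dist (s n) L < e" by (rule N)
      with y(2) have "dist p L < 2 * e" using dist_triangle[of p L "s n"] by simp
      then show False by (simp add: e_def)
    qed
    then show "y \<in> s ` {..<N}" using y by auto
  qed
  then have "finite (range s \<inter> ball p e)" by (rule finite_subset) auto
  with assms(2) e show False by (simp add: islimpt_eq_infinite_ball)
qed

lemma conv_finite_acc:
  assumes "B \<in> conv" shows "finite {p. p islimpt B}"
proof -
  from assms obtain S where S: "finite S" "\<forall>s\<in>S. conv_seq s" "B \<subseteq> (\<Union>s\<in>S. range s)"
    unfolding conv_def by auto
  have "{p. p islimpt B} \<subseteq> (\<lambda>s. lim s) ` S"
  proof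
    fix p assume "p \<in> {p. p islimpt B}"
    then have "p islimpt (\<Union>s\<in>S. range s)" using S(3) islimpt_subset by auto
    then obtain s where s: "s \<in> S" "p islimpt range s"
      using islimpt_finite_union_iff[OF S(1), of p "\<lambda>s. range s"] by blast
    then obtain L where "s \<longlonglongrightarrow> L" using S(2) unfolding conv_seq_def by auto
    with s have "p = lim s" using limpt_range_conv limI by metis
    then show "p \<in> (\<lambda>s. lim s) ` S" using s by auto
  qed
  then show ?thesis using S(1) finite_subset by blast
qed

lemma fresh_seq:
  fixes C :: "nat \<Rightarrow> 'a set"
  assumes inf: "\<And>j. infinite (C j)"
  shows "\<exists>y. \<forall>j. y j \<in> C j \<and> (\<forall>i<j. y i \<noteq> y j)"
proof -
  define ch where "ch j S = (SOME q. q \<in> C j \<and> q \<notin> S)" for j S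
  have ch: "ch j S \<in> C j \<and> ch j S \<notin> S" if "finite S" for j S
  proof -
    have "infinite (C j - S)" using inf that by (simp add: Diff_infinite_finite)
    then obtain q where "q \<in> C j - S" using infinite_imp_nonempty by blast
    then show ?thesis unfolding ch_def using someI_ex[of "\<lambda>q. q \<in> C j \<and> q \<notin> S"] by blast
  qed
  define bl where "bl = rec_nat [] (\<lambda>j l. l @ [ch j (set l)])"
  have blS: "bl (Suc j) = bl j @ [ch j (set (bl j))]" for j by (simp add: bl_def)
  have len: "length (bl j) = j" for j by (induction j) (simp_all add: bl_def)
  have pref: "i < j \<Longrightarrow> bl j ! i = bl (Suc i) ! i" for i j
  proof (induction j)
    case 0 then show ?case by simp
  next
    case (Suc j)
    show ?case
    proof (cases "i < j")
      case True
      then have "bl (Suc j) ! i = bl j ! i" by (simp add: blS nth_append len)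
      then show ?thesis using Suc.IH True by simp
    next
      case False
      then have "i = j" using Suc.prems by simp
      then show ?thesis by simp
    qed
  qed
  define y where "y j = bl (Suc j) ! j" for j
  have yj: "y j = ch j (set (bl j))" for j by (simp add: y_def blS nth_append len)
  have eq: "bl j ! i = y i" if "i < j" for i j using pref[OF that] by (simp add: y_def)
  have setbl: "set (bl j) = y ` {..<j}" for j
  proof -
    have "set (bl j) = (\<lambda>i. bl j ! i) ` {..<j}" by (auto simp: set_conv_nth len)
    also have "\<dots> = y ` {..<j}" by (rule image_cong[OF refl]) (simp add: eq)
    finally show ?thesis .
  qed
  have main: "y j \<in> C j \<and> (\<forall>i<j. y i \<noteq> y j)" for j
  proof -
    have "finite (set (bl j))" by simp
    then have c0: "y j \<in> C j \<and> y j \<notin> set (bl j)" using ch[of "set (bl j)" j] unfolding yj by blast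
    then have c: "y j \<in> C j" "y j \<notin> y ` {..<j}" unfolding setbl[of j] by blast+
    have "y i \<noteq> y j" if "i < j" for i
    proof -
      from that have "y i \<in> y ` {..<j}" by simp
      with c(2) show ?thesis by metis
    qed
    with c(1) show ?thesis by blast
  qed
  then show ?thesis by blast
qed

lemma conv_Union:
  assumes "finite I" "\<And>i. i \<in> I \<Longrightarrow> B i \<in> conv"
  shows "(\<Union>i\<in>I. B i) \<in> conv"
proof -
  have "\<forall>i\<in>I. \<exists>S. finite S \<and> (\<forall>s\<in>S. conv_seq s) \<and> B i \<subseteq> (\<Union>s\<in>S. range s)"
    using assms(2) unfolding conv_def by blast
  then have "\<exists>S. \<forall>i\<in>I. finite (S i) \<and> (\<forall>s\<in>S i. conv_seq s) \<and> B i \<subseteq> (\<Union>s\<in>S i. range s)"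
    by (rule bchoice)
  then obtain S where S0: "\<forall>i\<in>I. finite (S i) \<and> (\<forall>s\<in>S i. conv_seq s) \<and> B i \<subseteq> (\<Union>s\<in>S i. range s)"
    by (elim exE)
  have S: "finite (S i) \<and> (\<forall>s\<in>S i. conv_seq s) \<and> B i \<subseteq> (\<Union>s\<in>S i. range s)" if "i \<in> I" for i
    using S0 that by (rule bspec)
  have sub: "(\<Union>i\<in>I. B i) \<subseteq> Q01" using assms(2) unfolding conv_def by blast
  show ?thesis unfolding conv_def
  proof (intro CollectI conjI exI[of _ "\<Union>i\<in>I. S i"])
    show "(\<Union>i\<in>I. B i) \<subseteq> Q01" by (rule sub)
    show "finite (\<Union>i\<in>I. S i)" using assms(1) S by auto
    show "\<forall>s\<in>\<Union>i\<in>I. S i. conv_seq s" using S by blast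
    show "(\<Union>i\<in>I. B i) \<subseteq> (\<Union>s\<in>\<Union>i\<in>I. S i. range s)"
    proof
      fix b assume "b \<in> (\<Union>i\<in>I. B i)"
      then obtain i where i: "i \<in> I" "b \<in> B i" by blast
      then obtain s where "s \<in> S i" "b \<in> range s" using S[OF i(1)] by blast
      then show "b \<in> (\<Union>s\<in>\<Union>i\<in>I. S i. range s)" using i(1) by blast
    qed
  qed
qed

lemma conv_finite:
  assumes "finite B" "B \<subseteq> Q01" shows "B \<in> conv"
proof -
  have cs: "conv_seq (\<lambda>n. b)" if "b \<in> B" for b
  proof -
    have "b \<in> Q01" using that assms(2) by blast
    then have "range (\<lambda>n. b) \<subseteq> Q01" "0 \<le> b" "b \<le> 1" by (auto simp: Q01_def)
    then show ?thesis unfolding conv_seq_def by (intro conjI exI[of _ b]) auto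
  qed
  show ?thesis unfolding conv_def
  proof (intro CollectI conjI exI[of _ "(\<lambda>b n. b) ` B"])
    show "B \<subseteq> Q01" by fact
    show "finite ((\<lambda>b n. b) ` B)" using assms(1) by simp
    show "\<forall>s\<in>(\<lambda>b n. b) ` B. conv_seq s" using cs by blast
    show "B \<subseteq> (\<Union>s\<in>(\<lambda>b n. b) ` B. range s)" by auto
  qed
qed

lemma conv_single_limit:
  assumes "B \<subseteq> Q01" "p \<in> {0..1}" "\<And>e. e > 0 \<Longrightarrow> finite {b\<in>B. e \<le> dist b p}"
  shows "B \<in> conv"
proof (cases "finite B")
  case True then show ?thesis by (rule conv_finite[OF _ assms(1)])
next
  case False
  have cB: "countable B"
  proof (rule countable_subset[OF _ countable_rat])
    show "B \<subseteq> \<rat>" using assms(1) unfolding Q01_def by blast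
  qed
  obtain e :: "real \<Rightarrow> nat" where e: "bij_betw e B UNIV" by (rule countableE_infinite[OF cB False])
  define s where "s = the_inv_into B e"
  have sb: "bij_betw s UNIV B" unfolding s_def by (rule bij_betw_the_inv_into[OF e])
  have lim: "s \<longlonglongrightarrow> p"
  proof (rule tendstoI)
    fix \<epsilon> :: real assume "\<epsilon> > 0"
    have "{n. \<not> dist (s n) p < \<epsilon>} \<subseteq> e ` {b\<in>B. \<epsilon> \<le> dist b p}"
    proof
      fix n assume "n \<in> {n. \<not> dist (s n) p < \<epsilon>}"
      moreover have "s n \<in> B" using sb by (auto simp: bij_betw_def)
      moreover have "e (s n) = n" unfolding s_def
        by (rule f_the_inv_into_f_bij_betw[OF e]) simp
      ultimately show "n \<in> e ` {b\<in>B. \<epsilon> \<le> dist b p}" by (metis (mono_tags, lifting) image_eqI mem_Collect_eq not_less)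
    qed
    then have "finite {n. \<not> dist (s n) p < \<epsilon>}"
      using assms(3)[OF \<open>\<epsilon> > 0\<close>] finite_subset by blast
    then have "eventually (\<lambda>n. dist (s n) p < \<epsilon>) cofinite" by (simp add: eventually_cofinite)
    then show "eventually (\<lambda>n. dist (s n) p < \<epsilon>) sequentially" by (simp add: cofinite_eq_sequentially)
  qed
  have rs: "range s = B" using sb by (simp add: bij_betw_def)
  have "conv_seq s" unfolding conv_seq_def
    using rs assms(1,2) lim by (intro conjI exI[of _ p]) auto
  then show ?thesis unfolding conv_def using assms(1) rs
    by (intro CollectI conjI exI[of _ "{s}"]) auto
qed

lemma acc_in01:
  assumes "B \<subseteq> Q01" "p islimpt B" shows "p \<in> {0..1}"
proof -
  have "p islimpt {0..1::real}" using assms islimpt_subset Q01_sub by blast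
  then show ?thesis using closed_limpt[of "{0..1::real}"] by auto
qed

lemma finite_acc_conv:
  assumes B: "B \<subseteq> Q01" and F: "finite {p. p islimpt B}"
  shows "B \<in> conv"
proof (cases "finite B")
  case True then show ?thesis using conv_finite B by blast
next
  case False
  define F where "F = {p. p islimpt B}"
  have "\<exists>z\<in>{0..1::real}. z islimpt B"
    by (rule Heine_Borel_imp_Bolzano_Weierstrass[OF compact_Icc False]) (use B Q01_sub in blast)
  then have Fne: "F \<noteq> {}" unfolding F_def by blast
  have Ffin: "finite F" using F unfolding F_def .
  define g where "g b = arg_min_on (\<lambda>q. dist b q) F" for b
  have g: "g b \<in> F \<and> (\<forall>q\<in>F. dist b (g b) \<le> dist b q)" for b
    using arg_min_if_finite[OF Ffin Fne, of "\<lambda>q. dist b q"] unfolding g_def by force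
  define Bp where "Bp p = {b\<in>B. g b = p}" for p
  have "B = (\<Union>p\<in>F. Bp p)" using g unfolding Bp_def by blast
  moreover have "Bp p \<in> conv" if pF: "p \<in> F" for p
  proof (rule conv_single_limit)
    show "Bp p \<subseteq> Q01" using B unfolding Bp_def by blast
    show "p \<in> {0..1}" using acc_in01[OF B] pF unfolding F_def by blast
    fix e :: real assume e: "e > 0"
    show "finite {b\<in>Bp p. e \<le> dist b p}"
    proof (rule ccontr)
      assume inf: "infinite {b\<in>Bp p. e \<le> dist b p}"
      have "\<exists>z\<in>{0..1::real}. z islimpt {b\<in>Bp p. e \<le> dist b p}"
        by (rule Heine_Borel_imp_Bolzano_Weierstrass[OF compact_Icc inf])
          (use B Q01_sub in \<open>auto simp: Bp_def\<close>)
      then obtain z where z: "z islimpt {b\<in>Bp p. e \<le> dist b p}" by blast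
      then have "z islimpt B" by (rule islimpt_subset) (auto simp: Bp_def)
      then have zF: "z \<in> F" unfolding F_def by simp
      from z e obtain b where b: "b \<in> {b\<in>Bp p. e \<le> dist b p}" "dist b z < e"
        unfolding islimpt_approachable by blast
      then have "g b = p" unfolding Bp_def by simp
      with g[of b] zF have "dist b p \<le> dist b z" by metis
      with b show False by simp
    qed
  qed
  ultimately show ?thesis using conv_Union[OF Ffin] by metis
qed

lemma build_x:
  fixes D :: "nat \<Rightarrow> real set" and L H :: "real set" and d :: real
  assumes DQ: "\<And>k. D k \<subseteq> Q01" and Dacc: "\<And>k. infinite {q. q islimpt D k}"
    and DL: "\<And>k. infinite (D k \<inter> L)" and DH: "\<And>k. infinite (D k \<inter> H)"
    and d: "d > 0" and sep: "\<And>a b. a \<in> L \<Longrightarrow> b \<in> H \<Longrightarrow> d \<le> dist a b"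
  shows "\<exists>x\<in>Xset. \<forall>k m. x (k,m) \<in> D k"
proof -
  have "\<exists>p. \<forall>j. p j \<in> {q. q islimpt D j} \<and> (\<forall>i<j. p i \<noteq> p j)"
    by (rule fresh_seq) (rule Dacc)
  then obtain p :: "nat \<Rightarrow> real" where p0: "\<forall>j. p j \<in> {q. q islimpt D j} \<and> (\<forall>i<j. p i \<noteq> p j)"
    by (elim exE)
  have plim: "p k islimpt D k" for k using p0 by blast
  have pinj: "inj p"
  proof (rule injI)
    fix i j assume "p i = p j"
    then show "i = j" using p0 by (metis linorder_neqE_nat)
  qed
  define C where "C j = (case prod_decode j of (k,m) \<Rightarrow>
      if m = 0 then D k \<inter> L else if m = 1 then D k \<inter> H else D k \<inter> ball (p k) (1 / real m) - {p k})" for j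
  have Cinf: "infinite (C j)" for j
  proof -
    obtain k m where km: "prod_decode j = (k,m)" by (cases "prod_decode j") auto
    show ?thesis
    proof (cases "m = 0 \<or> m = 1")
      case True then show ?thesis using DL DH unfolding C_def km by auto
    next
      case False
      then have m: "m \<ge> 2" by auto
      have "infinite (D k \<inter> ball (p k) (1 / real m))"
        using plim[of k] m unfolding islimpt_eq_infinite_ball by simp
      then have "infinite (D k \<inter> ball (p k) (1 / real m) - {p k})" by simp
      then show ?thesis using False unfolding C_def km by simp
    qed
  qed
  have "\<exists>y. \<forall>j. y j \<in> C j \<and> (\<forall>i<j. y i \<noteq> y j)"
    by (rule fresh_seq) (rule Cinf)
  then obtain y :: "nat \<Rightarrow> real" where y0: "\<forall>j. y j \<in> C j \<and> (\<forall>i<j. y i \<noteq> y j)"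
    by (elim exE)
  have yinj: "inj y"
  proof (rule injI)
    fix i j assume "y i = y j"
    then show "i = j" using y0 by (metis linorder_neqE_nat)
  qed
  define x where "x = (\<lambda>km. y (prod_encode km))"
  have xC: "x (k,m) \<in> (if m = 0 then D k \<inter> L else if m = 1 then D k \<inter> H else D k \<inter> ball (p k) (1 / real m) - {p k})" for k m
  proof -
    have "y (prod_encode (k,m)) \<in> C (prod_encode (k,m))" using y0 by blast
    then show ?thesis unfolding x_def C_def by simp
  qed
  have xD: "x (k,m) \<in> D k" for k m using xC[of k m] by (auto split: if_splits)
  have xL: "x (k,0) \<in> L" for k using xC[of k 0] by simp
  have xH: "x (k,1) \<in> H" for k using xC[of k 1] by simp
  have xB: "dist (x (k,m)) (p k) < 1 / real m \<and> x (k,m) \<noteq> p k" if "m \<ge> 2" for k m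
    using xC[of k m] that by (auto simp: dist_commute)
  have xinj: "inj x" unfolding x_def
  proof (rule injI)
    fix a b assume "y (prod_encode a) = y (prod_encode b)"
    then have "prod_encode a = prod_encode b" by (rule injD[OF yinj])
    then show "a = b" by (rule injD[OF inj_prod_encode])
  qed
  have r1: "range x \<subseteq> Q01"
  proof
    fix z assume "z \<in> range x"
    then obtain k m where "z = x (k,m)" by (metis rangeE surj_pair)
    then have "z \<in> D k" using xD by simp
    then show "z \<in> Q01" using DQ by blast
  qed
  have r2: "\<exists>U. open U \<and> p0 \<in> U \<and> (\<forall>n. \<not> tail_img x n \<subseteq> U)" for p0
    proof (intro exI[of _ "ball p0 (d/2)"] conjI allI)
      show "open (ball p0 (d/2))" by simp
      show "p0 \<in> ball p0 (d/2)" using d by simp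
      fix n
      show "\<not> tail_img x n \<subseteq> ball p0 (d / 2)"
      proof
        assume sub: "tail_img x n \<subseteq> ball p0 (d / 2)"
        have "x (Suc n, 0) \<in> tail_img x n" "x (Suc n, 1) \<in> tail_img x n"
          unfolding tail_img_def by auto
        then have a: "dist p0 (x (Suc n, 0)) < d/2" "dist p0 (x (Suc n, 1)) < d/2"
          using sub by auto
        have "dist (x (Suc n, 0)) (x (Suc n, 1)) \<le> dist p0 (x (Suc n, 0)) + dist p0 (x (Suc n, 1))"
          by (rule dist_triangle3)
        with a have "dist (x (Suc n, 0)) (x (Suc n, 1)) < d" by simp
        with sep[OF xL[of "Suc n"] xH[of "Suc n"]] show False by linarith
      qed
    qed
  have r3: "tail_img x n \<notin> conv" for n
    proof
      assume "tail_img x n \<in> conv"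
      then have fin: "finite {q. q islimpt tail_img x n}" by (rule conv_finite_acc)
      have "p ` {n<..} \<subseteq> {q. q islimpt tail_img x n}"
      proof
        fix q assume "q \<in> p ` {n<..}"
        then obtain k where k: "k > n" "q = p k" by auto
        have "q islimpt tail_img x n" unfolding islimpt_approachable
        proof (intro allI impI)
          fix e :: real assume e: "e > 0"
          obtain m :: nat where m: "real m > 1 / e" using reals_Archimedean2 by blast
          define m' where "m' = m + 2"
          have m'2: "m' \<ge> 2" unfolding m'_def by simp
          have "1 / real m' < e"
          proof -
            have "real m' > 1 / e" using m unfolding m'_def by simp
            then have "real m' * e > 1" using e by (simp add: field_simps)
            then show ?thesis using e m'2 by (simp add: field_simps)
          qed
          moreover have "x (k, m') \<in> tail_img x n" using k unfolding tail_img_def by auto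
          ultimately show "\<exists>x'\<in>tail_img x n. x' \<noteq> q \<and> dist x' q < e"
            using xB[OF m'2, of k] k by force
        qed
        then show "q \<in> {q. q islimpt tail_img x n}" by simp
      qed
      moreover have "infinite (p ` {n<..})"
      proof
        assume "finite (p ` {n<..})"
        moreover have "inj_on p {n<..}" using pinj by (rule inj_on_subset) simp
        ultimately have "finite {n<..}" by (rule finite_imageD)
        then show False using infinite_Ioi[of n] by simp
      qed
      ultimately show False using fin finite_subset by blast
    qed
  have "x \<in> Xset" unfolding Xset_def mem_Collect_eq using r1 r2 xinj r3 by simp
  then show ?thesis using xD by (intro bexI[of _ x]) auto
qed

lemma rho01_eq:
  assumes ad: "almost_disjoint_family A" and K: "finite K"
  shows "rho01 A x (A a - K) = tail_img (x a) (max0 (A a \<inter> K))"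
proof -
  have uniq: "b = a" if "\<exists>K'. finite K' \<and> A a - K = A b - K'" for b
  proof (rule ccontr)
    assume ne: "b \<noteq> a"
    from that obtain K' where "A a - K = A b - K'" by blast
    then have "A a \<subseteq> (A a \<inter> A b) \<union> K" by blast
    moreover have "finite (A a \<inter> A b)" using ad ne unfolding almost_disjoint_family_def by metis
    ultimately have "finite (A a)" using K finite_subset by blast
    then show False using ad unfolding almost_disjoint_family_def by blast
  qed
  have ex: "\<exists>K'. finite K' \<and> A a - K = A a - K'" using K by blast
  have "(SOME b. \<exists>K'. finite K' \<and> A a - K = A b - K') = a"
    by (rule some_equality[where P = "\<lambda>b. \<exists>K'. finite K' \<and> A a - K = A b - K'", OF ex uniq])
  then show ?thesis unfolding rho01_def Let_def by (simp add: Diff_Diff_Int)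
qed

lemma exists_big_in:
  assumes "infinite (S :: nat set)" shows "\<exists>m\<in>S. m \<ge> N"
  using assms unfolding infinite_nat_iff_unbounded_le by blast

lemma part1:
  assumes ad: "almost_disjoint_family A" and bij: "bij_betw x UNIV Xset"
  shows "katetov_le (rho01 A x) (Abar A) (UNIV :: nat set) Q01 rho_conv conv_plus Q01 Q01"
  unfolding katetov_le_def
proof (intro exI[of _ id] conjI ballI)
  fix l assume "l \<in> Q01" then show "id l \<in> Q01" by simp
next
  fix S1 assume "S1 \<in> conv_plus"
  then have S1Q: "S1 \<subseteq> Q01" and S1c: "S1 \<notin> conv" unfolding conv_plus_def by auto
  have inf: "infinite {q. q islimpt S1}" using finite_acc_conv[OF S1Q] S1c by blast
  then obtain a where a: "a \<in> {q. q islimpt S1}" using infinite_imp_nonempty by blast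
  have "infinite ({q. q islimpt S1} - {a})" using inf by simp
  then obtain b where b: "b \<in> {q. q islimpt S1} - {a}" using infinite_imp_nonempty by blast
  define d where "d = dist a b"
  have d: "d > 0" using b unfolding d_def by simp
  have "\<exists>y\<in>Xset. \<forall>k m. y (k,m) \<in> (\<lambda>k. S1) k"
  proof (rule build_x[where L = "S1 \<inter> ball a (d/3)" and H = "S1 \<inter> ball b (d/3)" and d = "d/3"])
    fix k
    show "(\<lambda>k. S1) k \<subseteq> Q01" using S1Q by simp
    show "infinite {q. q islimpt (\<lambda>k. S1) k}" using inf by simp
    have "infinite (S1 \<inter> ball a (d/3))" using a d unfolding islimpt_eq_infinite_ball by simp
    then show "infinite ((\<lambda>k. S1) k \<inter> (S1 \<inter> ball a (d/3)))" by (simp add: Int_absorb1)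
    have "infinite (S1 \<inter> ball b (d/3))" using b d unfolding islimpt_eq_infinite_ball by simp
    then show "infinite ((\<lambda>k. S1) k \<inter> (S1 \<inter> ball b (d/3)))" by (simp add: Int_absorb1)
  next
    show "0 < d/3" using d by simp
  next
    fix u v assume u: "u \<in> S1 \<inter> ball a (d/3)" and v: "v \<in> S1 \<inter> ball b (d/3)"
    have "dist a b \<le> dist a u + dist u v + dist v b"
      using dist_triangle[of a b u] dist_triangle[of u b v] by linarith
    moreover have "dist a u < d/3" "dist v b < d/3" using u v by (auto simp: dist_commute)
    ultimately show "d/3 \<le> dist u v" unfolding d_def by linarith
  qed
  then obtain y where yX: "y \<in> Xset" and yS: "\<And>k m. y (k,m) \<in> S1" by auto
  have "y \<in> range x" using bij yX by (simp add: bij_betw_def)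
  then obtain \<alpha> where y: "y = x \<alpha>" by blast
  have yinj: "inj y" using yX unfolding Xset_def by blast
  have infA: "infinite (A \<alpha>)" using ad unfolding almost_disjoint_family_def by blast
  show "\<exists>S2\<in>Abar A. \<forall>K1. finite K1 \<and> K1 \<subseteq> Q01 \<longrightarrow>
          (\<exists>K2. finite K2 \<and> K2 \<subseteq> UNIV \<and> rho01 A x (S2 - K2) \<subseteq> id ` rho_conv (S1 - K1))"
  proof (intro bexI[of _ "A \<alpha> - {}"] allI impI)
    show "A \<alpha> - {} \<in> Abar A" unfolding Abar_def by blast
    fix K1 :: "real set" assume K1: "finite K1 \<and> K1 \<subseteq> Q01"
    define P where "P = y -` K1"
    have Pfin: "finite P" unfolding P_def using K1 yinj by (simp add: finite_vimageI)
    define N where "N = Max (insert 0 (fst ` P))"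
    have N: "k \<le> N" if "(k, j) \<in> P" for k j
      unfolding N_def using Pfin that by (intro Max_ge) force+
    obtain m where m: "m \<in> A \<alpha>" "m \<ge> N" using exists_big_in[OF infA] by blast
    have r: "rho01 A x (A \<alpha> - {m}) = tail_img y m"
      using rho01_eq[OF ad, of "{m}" x \<alpha>] m y by (simp add: max0_def)
    have "tail_img y m \<subseteq> S1 - K1"
    proof
      fix z assume "z \<in> tail_img y m"
      then obtain k j where kj: "k > m" "z = y (k,j)" unfolding tail_img_def by auto
      have "z \<in> S1" using yS kj by simp
      moreover have "z \<notin> K1"
      proof
        assume "z \<in> K1"
        then have "(k,j) \<in> P" unfolding P_def using kj by simp
        then have "k \<le> N" by (rule N)
        then show False using kj m by simp
      qed
      ultimately show "z \<in> S1 - K1" by simp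
    qed
    then have "rho01 A x (A \<alpha> - {} - {m}) \<subseteq> id ` rho_conv (S1 - K1)"
      using r by (simp add: rho_conv_def)
    then show "\<exists>K2. finite K2 \<and> K2 \<subseteq> UNIV \<and> rho01 A x (A \<alpha> - {} - K2) \<subseteq> id ` rho_conv (S1 - K1)"
      by blast
  qed
qed

lemma interval_limpt:
  assumes ab: "0 \<le> a" "a < b" "b \<le> 1" and p: "p \<in> {a..b}"
  shows "p islimpt {q\<in>Q01. a \<le> q \<and> q \<le> b}"
  unfolding islimpt_approachable
proof (intro allI impI)
  fix e :: real assume e: "e > 0"
  have pa: "a \<le> p" "p \<le> b" using p by auto
  show "\<exists>q\<in>{q\<in>Q01. a \<le> q \<and> q \<le> b}. q \<noteq> p \<and> dist q p < e"
  proof (cases "p < b")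
    case True
    have pt: "p < min (p + e) b" using True e by simp
    obtain r where r: "r \<in> \<rat>" "p < r" "r < min (p + e) b"
      using Rats_dense_in_real[OF pt] by blast
    have r1: "a \<le> r" "r \<le> b" "0 \<le> r" "r \<le> 1" "r < p + e" using r pa ab by linarith+
    have "r \<in> Q01" unfolding Q01_def using r(1) r1 by simp
    then have "r \<in> {q\<in>Q01. a \<le> q \<and> q \<le> b}" using r1 by simp
    moreover have "r \<noteq> p" using r by simp
    moreover have "dist r p < e" using r r1 by (simp add: dist_real_def)
    ultimately show ?thesis by blast
  next
    case False
    then have pb: "p = b" using pa by simp
    have pt: "max (p - e) a < p" using pb ab e by simp
    obtain r where r: "r \<in> \<rat>" "max (p - e) a < r" "r < p"
      using Rats_dense_in_real[OF pt] by blast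
    have r1: "a \<le> r" "r \<le> b" "0 \<le> r" "r \<le> 1" "p - e < r" using r pa ab pb by linarith+
    have "r \<in> Q01" unfolding Q01_def using r(1) r1 by simp
    then have "r \<in> {q\<in>Q01. a \<le> q \<and> q \<le> b}" using r1 by simp
    moreover have "r \<noteq> p" using r by simp
    moreover have "dist r p < e" using r r1 by (simp add: dist_real_def)
    ultimately show ?thesis by blast
  qed
qed

lemma interval_acc_inf:
  assumes ab: "0 \<le> a" "a < b" "b \<le> 1"
  shows "infinite {p. p islimpt {q\<in>Q01. a \<le> q \<and> q \<le> b}}"
proof
  assume "finite {p. p islimpt {q\<in>Q01. a \<le> q \<and> q \<le> b}}"
  moreover have "{a..b} \<subseteq> {p. p islimpt {q\<in>Q01. a \<le> q \<and> q \<le> b}}"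
    using interval_limpt[OF ab] by blast
  ultimately have "finite {a..b}" by (rule finite_subset[rotated])
  then show False using infinite_Icc[OF ab(2)] by simp
qed

lemma cluster:
  fixes f :: "real \<Rightarrow> real"
  assumes BQ: "B \<subseteq> Q01" and Bacc: "infinite {q. q islimpt B}" and fQ: "\<forall>l\<in>Q01. f l \<in> Q01"
  shows "\<exists>c. \<forall>r>0. \<exists>E. E \<subseteq> B \<and> f ` E \<subseteq> ball c r \<and> infinite {q. q islimpt E}"
proof (rule ccontr)
  assume contra: "\<not> ?thesis"
  have "\<forall>c. \<exists>r. r > 0 \<and> (\<forall>E. f ` E \<subseteq> ball c r \<longrightarrow> E \<subseteq> B \<longrightarrow> finite {q. q islimpt E})"
  proof
    fix c
    have "\<not> (\<forall>r>0. \<exists>E. E \<subseteq> B \<and> f ` E \<subseteq> ball c r \<and> infinite {q. q islimpt E})"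
      using contra by (rule contrapos_nn) (rule exI)
    then show "\<exists>r. r > 0 \<and> (\<forall>E. f ` E \<subseteq> ball c r \<longrightarrow> E \<subseteq> B \<longrightarrow> finite {q. q islimpt E})"
      by simp
  qed
  then have "\<exists>r. \<forall>c. r c > 0 \<and> (\<forall>E. f ` E \<subseteq> ball c (r c) \<longrightarrow> E \<subseteq> B \<longrightarrow> finite {q. q islimpt E})"
    by (rule choice)
  then obtain r where r: "\<And>c. r c > 0" and rE: "\<And>c E. f ` E \<subseteq> ball c (r c) \<Longrightarrow> E \<subseteq> B \<Longrightarrow> finite {q. q islimpt E}"
    by blast
  have cov: "{0..1::real} \<subseteq> (\<Union>c\<in>{0..1}. ball c (r c))" using r by force
  obtain C where C: "C \<subseteq> {0..1}" "finite C" "{0..1::real} \<subseteq> (\<Union>c\<in>C. ball c (r c))"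
    using compactE_image[OF compact_Icc _ cov] by blast
  define E where "E c = B \<inter> f -` ball c (r c)" for c
  have BU: "B \<subseteq> (\<Union>c\<in>C. E c)"
  proof
    fix b assume b: "b \<in> B"
    then have "f b \<in> {0..1}" using fQ BQ Q01_sub by blast
    then obtain c where "c \<in> C" "f b \<in> ball c (r c)" using C(3) by blast
    then show "b \<in> (\<Union>c\<in>C. E c)" using b unfolding E_def by blast
  qed
  have "{q. q islimpt B} \<subseteq> (\<Union>c\<in>C. {q. q islimpt E c})"
  proof
    fix q assume "q \<in> {q. q islimpt B}"
    then have "q islimpt (\<Union>c\<in>C. E c)" using BU islimpt_subset by blast
    then obtain c where "c \<in> C" "q islimpt E c" using islimpt_finite_union_iff[OF C(2), of q E] by blast
    then show "q \<in> (\<Union>c\<in>C. {q. q islimpt E c})" by blast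
  qed
  moreover have "finite (\<Union>c\<in>C. {q. q islimpt E c})"
  proof (rule finite_UN_I[OF C(2)])
    fix c assume "c \<in> C"
    show "finite {q. q islimpt E c}" by (rule rE) (auto simp: E_def)
  qed
  ultimately have "finite {q. q islimpt B}" by (rule finite_subset)
  then show False using Bacc by simp
qed

lemma acc_inf_imp_inf:
  assumes "infinite {q::real. q islimpt E}" shows "infinite E"
proof
  assume "finite E"
  then have "{q::real. q islimpt E} = {}" using islimpt_finite by blast
  then show False using assms by simp
qed

lemma part2:
  assumes ad: "almost_disjoint_family A" and bij: "bij_betw x UNIV Xset"
  shows "\<not> katetov_le rho_conv conv_plus Q01 Q01 (rho01 A x) (Abar A) (UNIV :: nat set) Q01"
proof
  assume "katetov_le rho_conv conv_plus Q01 Q01 (rho01 A x) (Abar A) (UNIV :: nat set) Q01"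
  then obtain f where fQ: "\<forall>l\<in>Q01. f l \<in> Q01"
    and main: "\<forall>S1\<in>Abar A. \<exists>S2\<in>conv_plus. \<forall>K1. finite K1 \<and> K1 \<subseteq> UNIV \<longrightarrow>
            (\<exists>K2. finite K2 \<and> K2 \<subseteq> Q01 \<and> rho_conv (S2 - K2) \<subseteq> f ` rho01 A x (S1 - K1))"
    unfolding katetov_le_def by blast
  define Lo where "Lo = {q\<in>Q01. 0 \<le> q \<and> q \<le> 1/3}"
  define Hi where "Hi = {q\<in>Q01. 2/3 \<le> q \<and> q \<le> 1}"
  have LoQ: "Lo \<subseteq> Q01" and HiQ: "Hi \<subseteq> Q01" unfolding Lo_def Hi_def by auto
  have Loacc: "infinite {q. q islimpt Lo}" unfolding Lo_def by (rule interval_acc_inf) auto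
  have Hiacc: "infinite {q. q islimpt Hi}" unfolding Hi_def by (rule interval_acc_inf) auto
  obtain c1 where c1: "\<forall>r>0. \<exists>E. E \<subseteq> Lo \<and> f ` E \<subseteq> ball c1 r \<and> infinite {q. q islimpt E}"
    using cluster[OF LoQ Loacc fQ] by (elim exE)
  obtain c2 where c2: "\<forall>r>0. \<exists>E. E \<subseteq> Hi \<and> f ` E \<subseteq> ball c2 r \<and> infinite {q. q islimpt E}"
    using cluster[OF HiQ Hiacc fQ] by (elim exE)
  have "\<forall>k. \<exists>E. E \<subseteq> Lo \<and> f ` E \<subseteq> ball c1 (1 / (real k + 1)) \<and> infinite {q. q islimpt E}"
  proof
    fix k :: nat have "1 / (real k + 1) > 0" by simp
    then show "\<exists>E. E \<subseteq> Lo \<and> f ` E \<subseteq> ball c1 (1 / (real k + 1)) \<and> infinite {q. q islimpt E}"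
      using c1 by blast
  qed
  then have "\<exists>E. \<forall>k. E k \<subseteq> Lo \<and> f ` E k \<subseteq> ball c1 (1 / (real k + 1)) \<and> infinite {q. q islimpt E k}"
    by (rule choice)
  then obtain E where E: "\<And>k. E k \<subseteq> Lo \<and> f ` E k \<subseteq> ball c1 (1 / (real k + 1)) \<and> infinite {q. q islimpt E k}"
    by blast
  have "\<forall>k. \<exists>F. F \<subseteq> Hi \<and> f ` F \<subseteq> ball c2 (1 / (real k + 1)) \<and> infinite {q. q islimpt F}"
  proof
    fix k :: nat have "1 / (real k + 1) > 0" by simp
    then show "\<exists>F. F \<subseteq> Hi \<and> f ` F \<subseteq> ball c2 (1 / (real k + 1)) \<and> infinite {q. q islimpt F}"
      using c2 by blast
  qed
  then have "\<exists>F. \<forall>k. F k \<subseteq> Hi \<and> f ` F k \<subseteq> ball c2 (1 / (real k + 1)) \<and> infinite {q. q islimpt F k}"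
    by (rule choice)
  then obtain F where F: "\<And>k. F k \<subseteq> Hi \<and> f ` F k \<subseteq> ball c2 (1 / (real k + 1)) \<and> infinite {q. q islimpt F k}"
    by blast
  define D where "D k = E k \<union> F k" for k
  have "\<exists>y\<in>Xset. \<forall>k m. y (k,m) \<in> D k"
  proof (rule build_x[where L = Lo and H = Hi and d = "1/3"])
    fix k
    show "D k \<subseteq> Q01" using E[of k] F[of k] LoQ HiQ unfolding D_def by blast
    have "{q. q islimpt E k} \<subseteq> {q. q islimpt D k}" unfolding D_def using islimpt_Un by blast
    then show "infinite {q. q islimpt D k}" using E[of k] finite_subset by blast
    have "infinite (E k)" using E[of k] acc_inf_imp_inf by blast
    moreover have "E k \<subseteq> D k \<inter> Lo" using E[of k] unfolding D_def by blast
    ultimately show "infinite (D k \<inter> Lo)" using finite_subset by blast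
    have "infinite (F k)" using F[of k] acc_inf_imp_inf by blast
    moreover have "F k \<subseteq> D k \<inter> Hi" using F[of k] unfolding D_def by blast
    ultimately show "infinite (D k \<inter> Hi)" using finite_subset by blast
  next
    show "(0::real) < 1/3" by simp
  next
    fix u v assume "u \<in> Lo" "v \<in> Hi"
    then have "u \<le> 1/3" "2/3 \<le> v" unfolding Lo_def Hi_def by auto
    then show "1/3 \<le> dist u v" by (simp add: dist_real_def)
  qed
  then obtain y where yX: "y \<in> Xset" and yD: "\<And>k m. y (k,m) \<in> D k" by auto
  have "y \<in> range x" using bij yX by (simp add: bij_betw_def)
  then obtain \<alpha> where y: "y = x \<alpha>" by blast
  have infA: "infinite (A \<alpha>)" using ad unfolding almost_disjoint_family_def by blast
  have "A \<alpha> - {} \<in> Abar A" unfolding Abar_def by blast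
  then have "\<exists>S2\<in>conv_plus. \<forall>K1. finite K1 \<and> K1 \<subseteq> UNIV \<longrightarrow>
            (\<exists>K2. finite K2 \<and> K2 \<subseteq> Q01 \<and> rho_conv (S2 - K2) \<subseteq> f ` rho01 A x (A \<alpha> - {} - K1))"
    by (rule bspec[OF main])
  then obtain S2 where S2: "S2 \<in> conv_plus" and S2K: "\<forall>K1. finite K1 \<and> K1 \<subseteq> UNIV \<longrightarrow>
            (\<exists>K2. finite K2 \<and> K2 \<subseteq> Q01 \<and> rho_conv (S2 - K2) \<subseteq> f ` rho01 A x (A \<alpha> - {} - K1))"
    by (rule bexE)
  have S2Q: "S2 \<subseteq> Q01" and S2c: "S2 \<notin> conv" using S2 unfolding conv_plus_def by auto
  have tail: "\<exists>K2. finite K2 \<and> S2 - K2 \<subseteq> ball c1 (1 / (real n + 1)) \<union> ball c2 (1 / (real n + 1))" for n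
  proof -
    obtain m where m: "m \<in> A \<alpha>" "m \<ge> n" using exists_big_in[OF infA] by blast
    obtain K2 where K2: "finite K2" "rho_conv (S2 - K2) \<subseteq> f ` rho01 A x (A \<alpha> - {} - {m})"
      using S2K[rule_format, of "{m}"] by auto
    have r: "rho01 A x (A \<alpha> - {m}) = tail_img y m"
      using rho01_eq[OF ad, of "{m}" x \<alpha>] m y by (simp add: max0_def)
    have "f ` tail_img y m \<subseteq> ball c1 (1 / (real n + 1)) \<union> ball c2 (1 / (real n + 1))"
    proof
      fix w assume "w \<in> f ` tail_img y m"
      then obtain k j where kj: "k > m" "w = f (y (k,j))" unfolding tail_img_def by auto
      have le: "1 / (real k + 1) \<le> 1 / (real n + 1)" using kj m by (simp add: frac_le)
      have "w \<in> ball c1 (1 / (real k + 1)) \<union> ball c2 (1 / (real k + 1))"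
        using yD[of k j] E[of k] F[of k] kj unfolding D_def by blast
      then show "w \<in> ball c1 (1 / (real n + 1)) \<union> ball c2 (1 / (real n + 1))"
        using le by auto
    qed
    then have "S2 - K2 \<subseteq> ball c1 (1 / (real n + 1)) \<union> ball c2 (1 / (real n + 1))"
      using K2(2) r by (simp add: rho_conv_def)
    then show ?thesis using K2(1) by blast
  qed
  have "{q. q islimpt S2} \<subseteq> {c1, c2}"
  proof
    fix z assume z: "z \<in> {q. q islimpt S2}"
    show "z \<in> {c1, c2}"
    proof (rule ccontr)
      assume "z \<notin> {c1, c2}"
      then have "dist z c1 > 0" "dist z c2 > 0" by auto
      define \<delta> where "\<delta> = min (dist z c1) (dist z c2)"
      have \<delta>: "\<delta> > 0" unfolding \<delta>_def using \<open>dist z c1 > 0\<close> \<open>dist z c2 > 0\<close> by simp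
      obtain n where n: "inverse (real (Suc n)) < \<delta> / 2" using reals_Archimedean[of "\<delta>/2"] \<delta> by auto
      define e where "e = 1 / (real n + 1)"
      have e: "e > 0" "e < \<delta> / 2" using n unfolding e_def by (auto simp: inverse_eq_divide add.commute)
      obtain K2 where K2: "finite K2" "S2 - K2 \<subseteq> ball c1 e \<union> ball c2 e"
        using tail[of n] unfolding e_def by blast
      have "S2 \<inter> ball z e \<subseteq> K2"
      proof
        fix w assume w: "w \<in> S2 \<inter> ball z e"
        show "w \<in> K2"
        proof (rule ccontr)
          assume "w \<notin> K2"
          then have "w \<in> ball c1 e \<union> ball c2 e" using w K2(2) by blast
          moreover have "dist z w < e" using w by simp
          moreover have "\<delta> \<le> dist z c1" "\<delta> \<le> dist z c2" unfolding \<delta>_def by auto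
          moreover have "dist z c1 \<le> dist z w + dist c1 w" by (metis dist_commute dist_triangle)
          moreover have "dist z c2 \<le> dist z w + dist c2 w" by (metis dist_commute dist_triangle)
          ultimately show False using e by auto
        qed
      qed
      then have "finite (S2 \<inter> ball z e)" using K2(1) finite_subset by blast
      moreover have "infinite (S2 \<inter> ball z e)" using z e unfolding islimpt_eq_infinite_ball by simp
      ultimately show False by simp
    qed
  qed
  then have "finite {q. q islimpt S2}" using finite_subset by blast
  then have "S2 \<in> conv" by (rule finite_acc_conv[OF S2Q])
  with S2c show False by simp
qed

theorem theorem6p8:
  fixes A :: "real \<Rightarrow> nat set" and x :: "real \<Rightarrow> nat \<times> nat \<Rightarrow> real"
  assumes "almost_disjoint_family A"
    and "bij_betw x UNIV Xset"
  shows "katetov_le (rho01 A x) (Abar A) (UNIV :: nat set) Q01 rho_conv conv_plus Q01 Q01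
       \<and> \<not> katetov_le rho_conv conv_plus Q01 Q01 (rho01 A x) (Abar A) (UNIV :: nat set) Q01"
  using part1[OF assms] part2[OF assms] by blast

end
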